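(* Let $1\le k<n$ and consider the Burnside process on $[k]^n$, with stationary distribution $$\pi(u)=\frac{(k-j_u)!}{k!\sum_{i=1}^k \left\{ {n \atop i} \right\}},$$ where $j_u$ is the number of distinct entries of $u$. Then for every $\epsilon\in(0,1)$ its mixing time satisfies $$t_{\mathrm{mix}}(\epsilon)\le\left\lceil (k-1)!\,\log\left(\epsilon^{-1}\right)\right\rceil.$$
   Context: $S_k$ acts on $[k]^n$ by $\sigma(u_1,\dots,u_n)=(\sigma(u_1),\dots,\sigma(u_n))$. The Burnside process on $[k]^n$ is the Markov chain which, from $u$, chooses $\sigma$ uniformly among permutations of $[k]$ fixing every value appearing in $u$, then produces $v\in[k]^n$ by choosing each coordinate independently and uniformly among the fixed points of $\sigma$. $\left\{ {n \atop i} \right\}$ is the Stirling number of the second kind. $t_{\mathrm{mix}}(\epsilon)=\min\{t:\max_u\|K^t(u,\cdot)-\pi\|_{TV}\le\epsilon\}$ with $\|\mu-\nu\|_{TV}=\frac12\sum|\mu-\nu|$. *)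

theory Defs
  imports "HOL-Analysis.Analysis" "HOL-Combinatorics.Combinatorics"
begin

definition states :: "nat \<Rightarrow> nat \<Rightarrow> nat list set" where
  "states k n = {u. length u = n \<and> set u \<subseteq> {1..k}}"

definition stab :: "nat \<Rightarrow> nat list \<Rightarrow> (nat \<Rightarrow> nat) set" where
  "stab k u = {\<sigma>. \<sigma> permutes {1..k} \<and> (\<forall>x\<in>set u. \<sigma> x = x)}"

definition fixpts :: "nat \<Rightarrow> (nat \<Rightarrow> nat) \<Rightarrow> nat set" where
  "fixpts k \<sigma> = {x\<in>{1..k}. \<sigma> x = x}"

definition burnside_K :: "nat \<Rightarrow> nat \<Rightarrow> nat list \<Rightarrow> nat list \<Rightarrow> real" where
  "burnside_K k n u v =
     (if u \<in> states k n \<and> v \<in> states k n then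
        (\<Sum>\<sigma>\<in>stab k u. (1 / real (card (stab k u))) *
            (if set v \<subseteq> fixpts k \<sigma> then (1 / real (card (fixpts k \<sigma>))) ^ n else 0))
      else 0)"

fun burnside_Kpow :: "nat \<Rightarrow> nat \<Rightarrow> nat \<Rightarrow> nat list \<Rightarrow> nat list \<Rightarrow> real" where
  "burnside_Kpow k n 0 u v = (if u = v then 1 else 0)"
| "burnside_Kpow k n (Suc t) u v =
     (\<Sum>w\<in>states k n. burnside_Kpow k n t u w * burnside_K k n w v)"

definition burnside_pi :: "nat \<Rightarrow> nat \<Rightarrow> nat list \<Rightarrow> real" where
  "burnside_pi k n u =
     real (fact (k - card (set u))) / (real (fact k) * real (\<Sum>i=1..k. Stirling n i))"

definition tv_dist :: "nat \<Rightarrow> nat \<Rightarrow> nat \<Rightarrow> nat list \<Rightarrow> real" where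
  "tv_dist k n t u = (1/2) * (\<Sum>v\<in>states k n. \<bar>burnside_Kpow k n t u v - burnside_pi k n v\<bar>)"

definition tmix :: "nat \<Rightarrow> nat \<Rightarrow> real \<Rightarrow> nat" where
  "tmix k n \<epsilon> = (LEAST t. Max ((\<lambda>u. tv_dist k n t u) ` states k n) \<le> \<epsilon>)"

end

theory Submission
  imports Defs
begin


lemma states_alt: "states k n = {xs. set xs \<subseteq> {1..k} \<and> length xs = n}"
  unfolding states_def by auto

lemma finite_states: "finite (states k n)"
  unfolding states_alt by (rule finite_lists_length_eq) simp

lemma card_states: "card (states k n) = k ^ n"
  unfolding states_alt using card_lists_length_eq[of "{1..k}" n] by simp

lemma states_Suc: "states k (Suc n) = (\<lambda>(x,u). x # u) ` ({1..k} \<times> states k n)"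
  unfolding states_def by (fastforce simp: length_Suc_conv image_iff)

lemma sum_states_Suc:
  "(\<Sum>u\<in>states k (Suc n). f u) = (\<Sum>u\<in>states k n. \<Sum>x\<in>{1..k}. f (x # u))"
proof -
  have inj: "inj_on (\<lambda>(x,u). x # u) ({1..k} \<times> states k n)" by (auto simp: inj_on_def)
  have "(\<Sum>u\<in>states k (Suc n). f u) = (\<Sum>p\<in>{1..k} \<times> states k n. f (fst p # snd p))"
    unfolding states_Suc by (subst sum.reindex[OF inj]) (simp add: case_prod_beta)
  also have "\<dots> = (\<Sum>x\<in>{1..k}. \<Sum>u\<in>states k n. f (x # u))"
    by (simp add: sum.cartesian_product case_prod_beta)
  also have "\<dots> = (\<Sum>u\<in>states k n. \<Sum>x\<in>{1..k}. f (x # u))"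
    by (rule sum.swap)
  finally show ?thesis .
qed

definition ffk :: "nat \<Rightarrow> nat \<Rightarrow> real" where "ffk k j = (\<Prod>i<j. real (k - i))"

lemma ffk_Suc: "ffk k (Suc j) = ffk k j * real (k - j)"
  by (simp add: ffk_def)

lemma ffk_fact: "j \<le> k \<Longrightarrow> ffk k j * real (fact (k - j)) = real (fact k)"
proof (induction j)
  case 0
  then show ?case by (simp add: ffk_def)
next
  case (Suc j)
  have e: "k - j = Suc (k - Suc j)" using Suc.prems by simp
  have "ffk k (Suc j) * real (fact (k - Suc j)) = ffk k j * (real (Suc (k - Suc j)) * real (fact (k - Suc j)))"
    unfolding ffk_Suc e by simp
  also have "\<dots> = ffk k j * real (fact (k - j))" unfolding e by (simp only: fact_Suc of_nat_mult of_nat_id)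
  finally show ?case using Suc by simp
qed

lemma inner_sum:
  fixes h :: "nat \<Rightarrow> real"
  assumes "set u \<subseteq> {1..k}"
  shows "(\<Sum>x\<in>{1..k}. h (card (set (x # u)))) =
     real (card (set u)) * h (card (set u)) + real (k - card (set u)) * h (Suc (card (set u)))"
proof -
  let ?j = "card (set u)"
  have split: "{1..k} = set u \<union> ({1..k} - set u)" using assms by auto
  have "(\<Sum>x\<in>{1..k}. h (card (set (x # u)))) = (\<Sum>x\<in>set u. h (card (set (x # u)))) + (\<Sum>x\<in>{1..k} - set u. h (card (set (x # u))))"
    by (subst split, rule sum.union_disjoint) auto
  also have "(\<Sum>x\<in>set u. h (card (set (x # u)))) = real ?j * h ?j"
    by (simp add: insert_absorb)
  also have "(\<Sum>x\<in>{1..k} - set u. h (card (set (x # u)))) = (\<Sum>x\<in>{1..k} - set u. h (Suc ?j))"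
    by (rule sum.cong) auto
  also have "\<dots> = real (k - ?j) * h (Suc ?j)"
    using card_Diff_subset[OF finite_set assms] by simp
  finally show ?thesis .
qed

lemma count_states:
  fixes h :: "nat \<Rightarrow> real"
  shows "(\<Sum>u\<in>states k n. h (card (set u))) = (\<Sum>j\<le>k. real (Stirling n j) * ffk k j * h j)"
proof (induction n arbitrary: h)
  case 0
  have "states k 0 = {[]}" by (auto simp: states_def)
  moreover have "\<forall>j\<in>{..k}. real (Stirling 0 j) * ffk k j * h j = (if j = 0 then h 0 else 0)"
    by (auto simp: ffk_def)
  ultimately show ?case by (simp add: sum.cong[OF refl, of _ _ "\<lambda>j. if j = 0 then h 0 else 0"])
next
  case (Suc n)
  define h' where "h' j = real j * h j + real (k - j) * h (Suc j)" for j
  have "(\<Sum>u\<in>states k (Suc n). h (card (set u))) = (\<Sum>u\<in>states k n. h' (card (set u)))"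
    unfolding sum_states_Suc h'_def
    by (rule sum.cong[OF refl], rule inner_sum) (auto simp: states_def)
  also have "\<dots> = (\<Sum>j\<le>k. real (Stirling n j) * ffk k j * h' j)" by (rule Suc.IH)
  also have "\<dots> = (\<Sum>j\<le>k. real (Stirling (Suc n) j) * ffk k j * h j)"
  proof (cases k)
    case 0
    then show ?thesis by (simp add: h'_def)
  next
    case (Suc m)
    have A: "(\<Sum>j\<le>k. real (Stirling n j) * ffk k j * (real j * h j)) =
       (\<Sum>i\<le>m. real (Stirling n (Suc i)) * ffk k (Suc i) * (real (Suc i) * h (Suc i)))"
      unfolding Suc by (subst sum.atMost_Suc_shift) simp
    have B: "(\<Sum>j\<le>k. real (Stirling n j) * ffk k j * (real (k - j) * h (Suc j))) =
       (\<Sum>i\<le>m. real (Stirling n i) * ffk k (Suc i) * h (Suc i))"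
      unfolding Suc by (subst sum.atMost_Suc) (simp add: ffk_Suc mult_ac)
    have C: "(\<Sum>j\<le>k. real (Stirling (Suc n) j) * ffk k j * h j) =
       (\<Sum>i\<le>m. real (Stirling (Suc n) (Suc i)) * ffk k (Suc i) * h (Suc i))"
      unfolding Suc by (subst sum.atMost_Suc_shift) simp
    show ?thesis
      unfolding C h'_def distrib_left sum.distrib A B
      by (simp add: sum.distrib[symmetric] algebra_simps)
  qed
  finally show ?case .
qed

lemma sum_fact_states:
  assumes "1 \<le> n"
  shows "(\<Sum>u\<in>states k n. real (fact (k - card (set u)))) = real (fact k) * real (\<Sum>i=1..k. Stirling n i)"
proof -
  have "(\<Sum>u\<in>states k n. real (fact (k - card (set u)))) = (\<Sum>j\<le>k. real (Stirling n j) * ffk k j * real (fact (k - j)))"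
    by (rule count_states)
  also have "\<dots> = (\<Sum>j\<le>k. real (Stirling n j) * real (fact k))"
    by (rule sum.cong[OF refl]) (auto simp: mult.assoc ffk_fact[simplified])
  also have "\<dots> = (\<Sum>j\<in>insert 0 {1..k}. real (Stirling n j) * real (fact k))"
    by (rule sum.cong) auto
  also have "\<dots> = (\<Sum>j=1..k. real (Stirling n j) * real (fact k))"
    using assms by (subst sum.insert) (auto simp: Suc_le_eq gr0_conv_Suc)
  finally show ?thesis by (simp add: sum_distrib_left mult.commute)
qed




lemma stab_eq:
  assumes "set u \<subseteq> {1..k}"
  shows "stab k u = {\<sigma>. \<sigma> permutes ({1..k} - set u)}"
proof (intro set_eqI iffI)
  fix \<sigma> assume "\<sigma> \<in> stab k u"
  then have p: "\<sigma> permutes {1..k}" and f: "\<forall>x\<in>set u. \<sigma> x = x" unfolding stab_def by auto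
  have st: "\<forall>x. x \<notin> {1..k} - set u \<longrightarrow> \<sigma> x = x"
  proof (intro allI impI)
    fix x assume "x \<notin> {1..k} - set u"
    then have "x \<notin> {1..k} \<or> x \<in> set u" by blast
    then show "\<sigma> x = x" using f permutes_not_in[OF p] by blast
  qed
  have "\<forall>y. \<exists>!x. \<sigma> x = y" using p unfolding permutes_def by (elim conjE) assumption
  then have "\<sigma> permutes ({1..k} - set u)" using st unfolding permutes_def by (intro conjI)
  then show "\<sigma> \<in> {\<sigma>. \<sigma> permutes ({1..k} - set u)}" by simp
next
  fix \<sigma> assume "\<sigma> \<in> {\<sigma>. \<sigma> permutes ({1..k} - set u)}"
  then have p: "\<sigma> permutes ({1..k} - set u)" by simp
  have "\<sigma> permutes {1..k}" by (rule permutes_subset[OF p]) blast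
  moreover have "\<forall>x\<in>set u. \<sigma> x = x"
  proof
    fix x assume "x \<in> set u"
    then have "x \<notin> {1..k} - set u" by blast
    then show "\<sigma> x = x" by (rule permutes_not_in[OF p])
  qed
  ultimately show "\<sigma> \<in> stab k u" unfolding stab_def by simp
qed

lemma finite_stab: "set u \<subseteq> {1..k} \<Longrightarrow> finite (stab k u)"
  by (simp add: stab_eq finite_permutations)

lemma card_stab: "set u \<subseteq> {1..k} \<Longrightarrow> card (stab k u) = fact (k - card (set u))"
  by (simp add: stab_eq card_permutations card_Diff_subset)

lemma stab_filter: "set u \<subseteq> {1..k} \<Longrightarrow>
   stab k u = {\<sigma>\<in>{\<sigma>. \<sigma> permutes {1..k}}. set u \<subseteq> fixpts k \<sigma>}"
  unfolding stab_def fixpts_def by auto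

lemma id_stab: "id \<in> stab k u"
  unfolding stab_def by (simp add: permutes_id)

lemma fixpts_sub: "fixpts k \<sigma> \<subseteq> {1..k}"
  unfolding fixpts_def by auto

definition gg :: "nat \<Rightarrow> nat \<Rightarrow> (nat \<Rightarrow> nat) \<Rightarrow> nat list \<Rightarrow> real" where
  "gg k n \<sigma> v = (if set v \<subseteq> fixpts k \<sigma> then (1 / real (card (fixpts k \<sigma>))) ^ n else 0)"

lemma K_alt: "u \<in> states k n \<Longrightarrow> v \<in> states k n \<Longrightarrow>
  burnside_K k n u v = (1 / real (card (stab k u))) * (\<Sum>\<sigma>\<in>stab k u. gg k n \<sigma> v)"
  unfolding burnside_K_def gg_def by (simp add: sum_distrib_left)

lemma K_nonneg: "burnside_K k n u v \<ge> 0"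
  unfolding burnside_K_def by (auto intro!: sum_nonneg)

lemma sum_gg:
  assumes "fixpts k \<sigma> \<noteq> {}"
  shows "(\<Sum>v\<in>states k n. gg k n \<sigma> v) = 1"
proof -
  let ?F = "fixpts k \<sigma>"
  have fin: "finite ?F" using fixpts_sub finite_subset by blast
  have cF: "card ?F \<noteq> 0" using fin assms by simp
  have "(\<Sum>v\<in>states k n. gg k n \<sigma> v) = (\<Sum>v\<in>{v\<in>states k n. set v \<subseteq> ?F}. (1 / real (card ?F)) ^ n)"
    unfolding gg_def sum.inter_filter[OF finite_states, symmetric] by simp
  also have "{v\<in>states k n. set v \<subseteq> ?F} = {xs. set xs \<subseteq> ?F \<and> length xs = n}"
    unfolding states_def using fixpts_sub by blast
  also have "(\<Sum>v\<in>{xs. set xs \<subseteq> ?F \<and> length xs = n}. (1 / real (card ?F)) ^ n) = real (card ?F ^ n) * (1 / real (card ?F)) ^ n"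
    by (simp add: card_lists_length_eq[OF fin])
  also have "\<dots> = 1" using cF by (simp add: power_one_over field_simps)
  finally show ?thesis .
qed

lemma K_rowsum:
  assumes "u \<in> states k n" "1 \<le> n"
  shows "(\<Sum>v\<in>states k n. burnside_K k n u v) = 1"
proof -
  have su: "set u \<subseteq> {1..k}" using assms by (simp add: states_def)
  have une: "set u \<noteq> {}" using assms by (auto simp: states_def)
  have fin: "finite (stab k u)" by (rule finite_stab[OF su])
  have c: "card (stab k u) \<noteq> 0" using card_stab[OF su] by simp
  have "(\<Sum>v\<in>states k n. burnside_K k n u v) = (\<Sum>v\<in>states k n. (1 / real (card (stab k u))) * (\<Sum>\<sigma>\<in>stab k u. gg k n \<sigma> v))"
    using assms by (intro sum.cong) (auto simp: K_alt)
  also have "\<dots> = (1 / real (card (stab k u))) * (\<Sum>\<sigma>\<in>stab k u. \<Sum>v\<in>states k n. gg k n \<sigma> v)"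
    by (simp add: sum_divide_distrib, subst sum.swap, rule refl)
  also have "(\<Sum>\<sigma>\<in>stab k u. \<Sum>v\<in>states k n. gg k n \<sigma> v) = (\<Sum>\<sigma>\<in>stab k u. 1)"
  proof (rule sum.cong[OF refl], rule sum_gg)
    fix \<sigma> assume "\<sigma> \<in> stab k u"
    then have "set u \<subseteq> fixpts k \<sigma>" using stab_filter[OF su] by auto
    then show "fixpts k \<sigma> \<noteq> {}" using une by auto
  qed
  also have "(1 / real (card (stab k u))) * (\<Sum>\<sigma>\<in>stab k u. 1) = 1" using c by simp
  finally show ?thesis .
qed

definition HH :: "nat \<Rightarrow> nat \<Rightarrow> nat list \<Rightarrow> nat list \<Rightarrow> real" where
  "HH k n u v = (\<Sum>\<sigma>\<in>{\<sigma>. \<sigma> permutes {1..k}}.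
      if set u \<subseteq> fixpts k \<sigma> \<and> set v \<subseteq> fixpts k \<sigma> then (1 / real (card (fixpts k \<sigma>))) ^ n else 0)"

lemma HH_sym: "HH k n u v = HH k n v u"
  unfolding HH_def by (simp add: conj_commute)

lemma detailed:
  assumes "u \<in> states k n" "v \<in> states k n"
  shows "burnside_pi k n u * burnside_K k n u v =
     HH k n u v / (real (fact k) * real (\<Sum>i=1..k. Stirling n i))"
proof -
  have su: "set u \<subseteq> {1..k}" using assms by (simp add: states_def)
  have fin: "finite {\<sigma>. \<sigma> permutes {1..k}}" by (simp add: finite_permutations)
  have c: "real (card (stab k u)) = real (fact (k - card (set u)))" using card_stab[OF su] by simp
  have f0: "real (fact (k - card (set u))) \<noteq> 0" by simp
  have "(\<Sum>\<sigma>\<in>stab k u. gg k n \<sigma> v) = HH k n u v"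
    unfolding stab_filter[OF su] HH_def sum.inter_filter[OF fin] gg_def
    by (rule sum.cong) auto
  then show ?thesis
    unfolding K_alt[OF assms] burnside_pi_def c using f0 by (simp add: field_simps)
qed

lemma pi_stationary:
  assumes "v \<in> states k n" "1 \<le> n"
  shows "(\<Sum>u\<in>states k n. burnside_pi k n u * burnside_K k n u v) = burnside_pi k n v"
proof -
  let ?Z = "real (fact k) * real (\<Sum>i=1..k. Stirling n i)"
  have "(\<Sum>u\<in>states k n. burnside_pi k n u * burnside_K k n u v) = (\<Sum>u\<in>states k n. HH k n u v / ?Z)"
    using assms by (intro sum.cong) (auto simp: detailed)
  also have "\<dots> = (\<Sum>u\<in>states k n. burnside_pi k n v * burnside_K k n v u)"
    using assms by (intro sum.cong) (auto simp: detailed HH_sym)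
  also have "\<dots> = burnside_pi k n v"
    using K_rowsum[OF assms] by (simp add: sum_distrib_left[symmetric])
  finally show ?thesis .
qed

lemma pi_sum:
  assumes "1 \<le> n" "1 \<le> k"
  shows "(\<Sum>u\<in>states k n. burnside_pi k n u) = 1"
proof -
  obtain m where m: "n = Suc m" using assms by (cases n) auto
  have "Stirling n 1 = 1" unfolding m One_nat_def using Stirling_1 by (simp only: One_nat_def)
  moreover have "Stirling n 1 \<le> (\<Sum>i=1..k. Stirling n i)"
    by (rule member_le_sum) (use assms in auto)
  ultimately have "(\<Sum>i=1..k. Stirling n i) \<ge> 1" by linarith
  then have B0: "real (1::nat) \<le> real (\<Sum>i=1..k. Stirling n i)" by (rule of_nat_mono)
  have B1: "(1::real) \<le> real (\<Sum>i=1..k. Stirling n i)" using B0 by (simp only: of_nat_1)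
  have P1: "0 < real (fact k)" by simp
  have P2: "0 < real (\<Sum>i=1..k. Stirling n i)" using B1 by linarith
  have Z: "real (fact k) * real (\<Sum>i=1..k. Stirling n i) \<noteq> 0" using mult_pos_pos[OF P1 P2] by linarith
  have "(\<Sum>u\<in>states k n. burnside_pi k n u) =
      (\<Sum>u\<in>states k n. real (fact (k - card (set u)))) / (real (fact k) * real (\<Sum>i=1..k. Stirling n i))"
    unfolding burnside_pi_def by (simp add: sum_divide_distrib)
  also have "\<dots> = 1" unfolding sum_fact_states[OF assms(1)] using Z by simp
  finally show ?thesis .
qed

lemma pi_nonneg: "burnside_pi k n u \<ge> 0"
  unfolding burnside_pi_def by (auto intro!: divide_nonneg_nonneg mult_nonneg_nonneg sum_nonneg)

lemma minor:
  assumes "u \<in> states k n" "v \<in> states k n" "1 \<le> n" "1 \<le> k"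
  shows "burnside_K k n u v \<ge> (1 / real (fact (k - 1))) / real (card (states k n))"
proof -
  have su: "set u \<subseteq> {1..k}" using assms by (simp add: states_def)
  have sv: "set v \<subseteq> {1..k}" using assms by (simp add: states_def)
  have une: "set u \<noteq> {}" using assms by (auto simp: states_def)
  then have j1: "card (set u) \<ge> 1" by (simp add: Suc_le_eq card_gt_0_iff)
  have fid: "fixpts k id = {1..k}" unfolding fixpts_def by auto
  have "gg k n id v = 1 / real (card (states k n))"
    unfolding gg_def fid card_states using sv by (simp add: power_one_over)
  moreover have "gg k n id v \<le> (\<Sum>\<sigma>\<in>stab k u. gg k n \<sigma> v)"
    using member_le_sum[of id "stab k u" "\<lambda>\<sigma>. gg k n \<sigma> v"] id_stab finite_stab[OF su]
    by (auto simp: gg_def)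
  ultimately have A: "1 / real (card (states k n)) \<le> (\<Sum>\<sigma>\<in>stab k u. gg k n \<sigma> v)" by simp
  have B: "1 / real (fact (k - 1)) \<le> 1 / real (card (stab k u))"
    unfolding card_stab[OF su] using j1
    by (intro divide_left_mono) (auto intro: fact_mono)
  have "(1 / real (fact (k - 1))) / real (card (states k n)) = (1 / real (fact (k - 1))) * (1 / real (card (states k n)))"
    by simp
  also have "\<dots> \<le> (1 / real (card (stab k u))) * (\<Sum>\<sigma>\<in>stab k u. gg k n \<sigma> v)"
    using A B by (intro mult_mono) auto
  finally show ?thesis unfolding K_alt[OF assms(1,2)] .
qed




lemma Kpow_rowsum:
  assumes "u \<in> states k n" "1 \<le> n"
  shows "(\<Sum>v\<in>states k n. burnside_Kpow k n t u v) = 1"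
proof (induction t)
  case 0
  then show ?case using assms by (simp add: finite_states)
next
  case (Suc t)
  have "(\<Sum>v\<in>states k n. burnside_Kpow k n (Suc t) u v) =
      (\<Sum>v\<in>states k n. \<Sum>w\<in>states k n. burnside_Kpow k n t u w * burnside_K k n w v)"
    by simp
  also have "\<dots> = (\<Sum>w\<in>states k n. \<Sum>v\<in>states k n. burnside_Kpow k n t u w * burnside_K k n w v)"
    by (rule sum.swap)
  also have "\<dots> = (\<Sum>w\<in>states k n. burnside_Kpow k n t u w * (\<Sum>v\<in>states k n. burnside_K k n w v))"
    by (simp add: sum_distrib_left)
  also have "\<dots> = (\<Sum>w\<in>states k n. burnside_Kpow k n t u w)"
    using K_rowsum assms(2) by simp
  finally show ?case using Suc by simp
qed

lemma contract:
  assumes "u \<in> states k n" "1 \<le> n" "1 \<le> k"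
  shows "(\<Sum>v\<in>states k n. \<bar>burnside_Kpow k n (Suc t) u v - burnside_pi k n v\<bar>)
     \<le> (1 - 1 / real (fact (k - 1))) * (\<Sum>v\<in>states k n. \<bar>burnside_Kpow k n t u v - burnside_pi k n v\<bar>)"
proof -
  define S where "S = states k n"
  define f where "f w = burnside_Kpow k n t u w - burnside_pi k n w" for w
  define \<delta> where "\<delta> = 1 / real (fact (k - 1))"
  define m where "m = \<delta> / real (card S)"
  have cS: "real (card S) \<noteq> 0" using assms by (simp add: S_def card_states)
  have f0: "(\<Sum>w\<in>S. f w) = 0"
    using Kpow_rowsum[OF assms(1,2)] pi_sum[OF assms(2,3)]
    by (simp add: f_def S_def sum_subtractf)
  have mK: "\<And>w v. w \<in> S \<Longrightarrow> v \<in> S \<Longrightarrow> m \<le> burnside_K k n w v"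
    unfolding m_def \<delta>_def S_def using minor assms by blast
  have step: "burnside_Kpow k n (Suc t) u v - burnside_pi k n v = (\<Sum>w\<in>S. f w * (burnside_K k n w v - m))"
    if v: "v \<in> S" for v
  proof -
    have "burnside_Kpow k n (Suc t) u v - burnside_pi k n v = (\<Sum>w\<in>S. burnside_Kpow k n t u w * burnside_K k n w v) - (\<Sum>w\<in>S. burnside_pi k n w * burnside_K k n w v)"
      using pi_stationary[of v k n] v assms by (simp add: S_def)
    also have "\<dots> = (\<Sum>w\<in>S. f w * burnside_K k n w v)"
      by (simp add: f_def sum_subtractf left_diff_distrib)
    also have "\<dots> = (\<Sum>w\<in>S. f w * burnside_K k n w v) - m * (\<Sum>w\<in>S. f w)" using f0 by simp
    also have "\<dots> = (\<Sum>w\<in>S. f w * (burnside_K k n w v - m))"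
      by (simp add: sum_subtractf right_diff_distrib sum_distrib_left mult.commute)
    finally show ?thesis .
  qed
  have "(\<Sum>v\<in>S. \<bar>burnside_Kpow k n (Suc t) u v - burnside_pi k n v\<bar>) = (\<Sum>v\<in>S. \<bar>\<Sum>w\<in>S. f w * (burnside_K k n w v - m)\<bar>)"
    using step by (intro sum.cong) auto
  also have "\<dots> \<le> (\<Sum>v\<in>S. \<Sum>w\<in>S. \<bar>f w\<bar> * (burnside_K k n w v - m))"
  proof (rule sum_mono)
    fix v assume v: "v \<in> S"
    have "\<bar>\<Sum>w\<in>S. f w * (burnside_K k n w v - m)\<bar> \<le> (\<Sum>w\<in>S. \<bar>f w * (burnside_K k n w v - m)\<bar>)"
      by (rule sum_abs)
    also have "\<dots> = (\<Sum>w\<in>S. \<bar>f w\<bar> * (burnside_K k n w v - m))"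
      using mK v by (intro sum.cong) (auto simp: abs_mult)
    finally show "\<bar>\<Sum>w\<in>S. f w * (burnside_K k n w v - m)\<bar> \<le> (\<Sum>w\<in>S. \<bar>f w\<bar> * (burnside_K k n w v - m))" .
  qed
  also have "\<dots> = (\<Sum>w\<in>S. \<Sum>v\<in>S. \<bar>f w\<bar> * (burnside_K k n w v - m))"
    by (rule sum.swap)
  also have "\<dots> = (\<Sum>w\<in>S. \<bar>f w\<bar> * (\<Sum>v\<in>S. burnside_K k n w v) - \<bar>f w\<bar> * (real (card S) * m))"
    by (simp add: sum_distrib_left right_diff_distrib sum_subtractf mult_ac)
  also have "\<dots> = (\<Sum>w\<in>S. \<bar>f w\<bar> * (1 - \<delta>))"
    using K_rowsum assms(2) cS by (intro sum.cong) (auto simp: S_def m_def right_diff_distrib)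
  also have "\<dots> = (1 - \<delta>) * (\<Sum>w\<in>S. \<bar>f w\<bar>)"
    by (simp add: sum_distrib_left mult.commute)
  finally show ?thesis by (simp add: S_def f_def \<delta>_def)
qed

lemma tv_bound:
  assumes "u \<in> states k n" "1 \<le> n" "1 \<le> k"
  shows "tv_dist k n t u \<le> (1 - 1 / real (fact (k - 1))) ^ t"
proof -
  define q where "q = 1 - 1 / real (fact (k - 1))"
  have q0: "q \<ge> 0" unfolding q_def by simp
  define D where "D t = (\<Sum>v\<in>states k n. \<bar>burnside_Kpow k n t u v - burnside_pi k n v\<bar>)" for t
  have "D t \<le> 2 * q ^ t"
  proof (induction t)
    case 0
    have "D 0 \<le> (\<Sum>v\<in>states k n. burnside_Kpow k n 0 u v + burnside_pi k n v)"
      unfolding D_def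
    proof (rule sum_mono)
      fix v
      show "\<bar>burnside_Kpow k n 0 u v - burnside_pi k n v\<bar> \<le> burnside_Kpow k n 0 u v + burnside_pi k n v"
        using pi_nonneg[of k n v] by auto
    qed
    also have "\<dots> = 2"
      using Kpow_rowsum[OF assms(1,2), of 0] pi_sum[OF assms(2,3)] by (simp add: sum.distrib)
    finally show ?case by simp
  next
    case (Suc t)
    have "D (Suc t) \<le> q * D t" unfolding D_def q_def by (rule contract[OF assms])
    also have "\<dots> \<le> q * (2 * q ^ t)" using Suc q0 by (intro mult_left_mono) auto
    finally show ?case by simp
  qed
  then show ?thesis unfolding tv_dist_def D_def q_def by simp
qed




theorem theorem4p5:
  fixes k n :: nat and \<epsilon> :: real
  assumes "1 \<le> k" and "k < n" and "0 < \<epsilon>" and "\<epsilon> < 1"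
  shows "real (tmix k n \<epsilon>) \<le> of_int \<lceil>real (fact (k - 1)) * ln (1 / \<epsilon>)\<rceil>"
proof -
  have n1: "1 \<le> n" using assms by simp
  define F where "F = real (fact (k - 1))"
  have F0: "F > 0" unfolding F_def by simp
  define q where "q = 1 - 1 / F"
  define c where "c = \<lceil>F * ln (1 / \<epsilon>)\<rceil>"
  define T where "T = nat c"
  have lnpos: "ln (1 / \<epsilon>) > 0" using assms by simp
  have pos: "F * ln (1 / \<epsilon>) > 0" using lnpos F0 by simp
  have c0: "c \<ge> 0" unfolding c_def using pos by linarith
  have TC: "real T = of_int c" unfolding T_def using c0 by simp
  have Tge: "F * ln (1 / \<epsilon>) \<le> real T" unfolding TC c_def by simp
  have q0: "q \<ge> 0" unfolding q_def F_def by simp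
  have qexp: "q \<le> exp (- (1 / F))" unfolding q_def using exp_ge_add_one_self[of "- (1 / F)"] by simp
  have "q ^ T \<le> exp (- (1 / F)) ^ T" using qexp q0 by (rule power_mono)
  also have "\<dots> = exp (real T * (- (1 / F)))" by (rule exp_of_nat_mult[symmetric])
  also have "\<dots> \<le> exp (- ln (1 / \<epsilon>))"
  proof -
    have "ln (1 / \<epsilon>) \<le> real T / F" using Tge F0 by (simp add: field_simps)
    then show ?thesis by simp
  qed
  also have "\<dots> = \<epsilon>" using assms by (simp add: ln_div)
  finally have qT: "q ^ T \<le> \<epsilon>" .
  have ne: "replicate n 1 \<in> states k n" using assms by (auto simp: states_def)
  have "Max ((\<lambda>u. tv_dist k n T u) ` states k n) \<le> \<epsilon>"
  proof (subst Max_le_iff)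
    show "finite ((\<lambda>u. tv_dist k n T u) ` states k n)" by (simp add: finite_states)
    show "(\<lambda>u. tv_dist k n T u) ` states k n \<noteq> {}" using ne by auto
    show "\<forall>a\<in>(\<lambda>u. tv_dist k n T u) ` states k n. a \<le> \<epsilon>"
    proof
      fix a assume "a \<in> (\<lambda>u. tv_dist k n T u) ` states k n"
      then obtain u where u: "u \<in> states k n" and a: "a = tv_dist k n T u" by blast
      have "tv_dist k n T u \<le> q ^ T" using tv_bound[OF u n1 assms(1), of T] unfolding q_def F_def .
      then show "a \<le> \<epsilon>" using a qT by linarith
    qed
  qed
  then have "tmix k n \<epsilon> \<le> T" unfolding tmix_def by (rule Least_le)
  then have "real (tmix k n \<epsilon>) \<le> real T" by simp
  then show ?thesis unfolding TC c_def F_def .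
qed


end
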